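(* For a nonzero real sequence $(\lambda_i)_{i\ge 0}$, let $\mathcal{H}_\lambda=\{\sum_i a_ix^i\in\mathbb{R}[x]:\sum_i a_i\lambda_i=0\}$. Among such hyperplanes with $\lambda_0=0$ and $\lambda_1\neq 0$, the ones that are closed under multiplication are exactly the following: (1) $\mathcal{H}_{\beta,\gamma}=\{p\in\mathbb{R}[x]: p(\beta)=p(\gamma)\}$ for real numbers $\beta\neq\gamma$; (2) $\mathcal{H}_\delta=\{p\in\mathbb{R}[x]: p'(\delta)=0\}$ for $\delta\in\mathbb{R}$; (3) $\mathcal{H}_{z,\bar z}=\{p\in\mathbb{R}[x]: p(z)=p(\bar z)\}=\{p\in\mathbb{R}[x]:\operatorname{Im}p(z)=0\}$ for $z\in\mathbb{C}\setminus\mathbb{R}$. *)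

theory Defs
  imports "HOL-Computational_Algebra.Polynomial" Complex_Main
begin

definition hyperplane :: "(nat \<Rightarrow> real) \<Rightarrow> real poly set" where
  "hyperplane lam = {p. (\<Sum>i\<le>degree p. coeff p i * lam i) = 0}"

definition mult_closed :: "real poly set \<Rightarrow> bool" where
  "mult_closed H \<longleftrightarrow> (\<forall>p\<in>H. \<forall>q\<in>H. p * q \<in> H)"

definition H_two_points :: "real \<Rightarrow> real \<Rightarrow> real poly set" where
  "H_two_points \<beta> \<gamma> = {p. poly p \<beta> = poly p \<gamma>}"

definition H_deriv :: "real \<Rightarrow> real poly set" where
  "H_deriv \<delta> = {p. poly (pderiv p) \<delta> = 0}"

definition H_conj :: "complex \<Rightarrow> real poly set" where
  "H_conj z = {p. poly (map_poly complex_of_real p) z = poly (map_poly complex_of_real p) (cnj z)}"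

end

theory Submission
  imports Defs
begin

definition Lf :: "(nat \<Rightarrow> real) \<Rightarrow> real poly \<Rightarrow> real" where
  "Lf lam p = (\<Sum>i\<le>degree p. coeff p i * lam i)"

lemma Lf_ext: "degree p \<le> N \<Longrightarrow> Lf lam p = (\<Sum>i\<le>N. coeff p i * lam i)"
  unfolding Lf_def by (rule sum.mono_neutral_left) (auto simp: coeff_eq_0)

lemma hyperplane_Lf: "hyperplane lam = {p. Lf lam p = 0}"
  by (simp add: hyperplane_def Lf_def)

lemma Lf_add: "Lf lam (p + q) = Lf lam p + Lf lam q"
proof -
  let ?N = "max (degree p) (degree q)"
  have "Lf lam (p + q) = (\<Sum>i\<le>?N. coeff (p+q) i * lam i)"
    by (rule Lf_ext) (simp add: degree_add_le)
  also have "\<dots> = (\<Sum>i\<le>?N. coeff p i * lam i) + (\<Sum>i\<le>?N. coeff q i * lam i)"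
    by (simp add: sum.distrib distrib_right)
  also have "\<dots> = Lf lam p + Lf lam q"
    using Lf_ext[of p ?N lam] Lf_ext[of q ?N lam] by simp
  finally show ?thesis .
qed

lemma Lf_diff: "Lf lam (p - q) = Lf lam p - Lf lam q"
proof -
  let ?N = "max (degree p) (degree q)"
  have "Lf lam (p - q) = (\<Sum>i\<le>?N. coeff (p-q) i * lam i)"
    by (rule Lf_ext) (simp add: degree_diff_le)
  also have "\<dots> = (\<Sum>i\<le>?N. coeff p i * lam i) - (\<Sum>i\<le>?N. coeff q i * lam i)"
    by (simp add: sum_subtractf left_diff_distrib)
  also have "\<dots> = Lf lam p - Lf lam q"
    using Lf_ext[of p ?N lam] Lf_ext[of q ?N lam] by simp
  finally show ?thesis .
qed

lemma Lf_monom: "Lf lam (monom a n) = a * lam n"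
proof -
  have "Lf lam (monom a n) = (\<Sum>i\<le>n. coeff (monom a n) i * lam i)"
    by (rule Lf_ext) (simp add: degree_monom_le)
  also have "\<dots> = a * lam n"
  proof -
    have "(\<lambda>i. coeff (monom a n) i * lam i) = (\<lambda>i. if i = n then a * lam n else 0)"
      by (auto simp: coeff_monom)
    then show ?thesis by (simp only:) simp
  qed
  finally show ?thesis .
qed

lemma Lf_scale: "Lf (\<lambda>i. c * f i) p = c * Lf f p"
  by (simp add: Lf_def sum_distrib_left algebra_simps)

lemma Lf_two: "Lf (\<lambda>i. (b^i - g^i) / d) p = (poly p b - poly p g) / d"
  by (simp add: Lf_def poly_altdef sum_subtractf sum_divide_distrib right_diff_distrib diff_divide_distrib mult.commute)

lemma Lf_Im: "Lf (\<lambda>i. Im (z^i) / d) p = Im (poly (map_poly complex_of_real p) z) / d"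
  by (simp add: Lf_def poly_altdef degree_map_poly coeff_map_poly Im_sum sum_divide_distrib)

lemma Lf_deriv: "Lf (\<lambda>i. of_nat i * x^(i-1)) p = poly (pderiv p) x"
proof -
  let ?n = "degree p"
  have "poly (pderiv p) x = (\<Sum>i\<le>?n. coeff (pderiv p) i * x^i)"
    unfolding poly_altdef
    by (rule sum.mono_neutral_left) (auto simp: coeff_eq_0 degree_pderiv)
  also have "\<dots> = (\<Sum>i\<le>?n. coeff p (Suc i) * (of_nat (Suc i) * x^i))"
    by (simp add: coeff_pderiv algebra_simps)
  also have "\<dots> = (\<Sum>i\<le>Suc ?n. coeff p i * (of_nat i * x^(i-1)))"
    by (simp only: sum.atMost_Suc_shift) simp
  also have "\<dots> = Lf (\<lambda>i. of_nat i * x^(i-1)) p"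
    by (rule Lf_ext[symmetric]) simp
  finally show ?thesis by simp
qed

lemma H_conj_iff: "p \<in> H_conj z \<longleftrightarrow> Im (poly (map_poly complex_of_real p) z) = 0"
proof -
  have "poly (map_poly complex_of_real p) (cnj z) = cnj (poly (map_poly complex_of_real p) z)"
    by (rule poly_cnj_real[symmetric]) (simp add: coeff_map_poly)
  then show ?thesis by (simp add: H_conj_def complex_eq_iff)
qed

lemma map_poly_of_real_mult:
  "map_poly (of_real :: real \<Rightarrow> complex) (p*q) = map_poly of_real p * map_poly of_real q"
  by (rule poly_eqI) (simp add: coeff_mult coeff_map_poly)

lemma mc_two: "mult_closed (H_two_points b g)"
  by (simp add: mult_closed_def H_two_points_def)
lemma mc_deriv: "mult_closed (H_deriv d)"
  by (simp add: mult_closed_def H_deriv_def pderiv_mult)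
lemma mc_conj: "mult_closed (H_conj z)"
  by (simp add: mult_closed_def H_conj_def map_poly_of_real_mult)

lemma prod_eq: "(monom (1::real) i - monom a 1) * (monom 1 2 - monom b 1) =
   monom 1 (i+2) - monom b (i+1) - monom a 3 + monom (a*b) 2"
  by (simp add: algebra_simps mult_monom numeral_3_eq_3 numeral_2_eq_2)

lemma rec_uniq:
  assumes "f 0 = g 0" "f 1 = g 1"
    "\<And>n::nat. f (n+2) = s * f (n+1) + t * f n" "\<And>n::nat. g (n+2) = s * g (n+1) + t * g n"
  shows "f = g"
proof -
  have "f n = g n \<and> f (Suc n) = g (Suc n)" for n
  proof (induction n)
    case 0 then show ?case using assms by simp
  next
    case (Suc n)
    then show ?case using assms(3,4)[of n] by simp
  qed
  then show ?thesis by auto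
qed

lemma forward:
  assumes l0: "lam 0 = 0" and l1: "lam 1 \<noteq> 0" and mc: "mult_closed (hyperplane lam)"
  shows "(\<exists>\<beta> \<gamma>. \<beta> \<noteq> \<gamma> \<and> hyperplane lam = H_two_points \<beta> \<gamma>) \<or>
         (\<exists>\<delta>. hyperplane lam = H_deriv \<delta>) \<or>
         (\<exists>z. z \<notin> \<real> \<and> hyperplane lam = H_conj z)"
proof -
  define c where "c = lam 1"
  have c0: "c \<noteq> 0" using l1 c_def by simp
  define mu where "mu i = lam i / c" for i
  have lam_eq: "lam = (\<lambda>i. c * mu i)" using c0 by (auto simp: mu_def)
  have mu0: "mu 0 = 0" using l0 by (simp add: mu_def)
  have mu1: "mu 1 = 1" using c0 by (simp add: mu_def c_def)
  have P: "monom 1 i - monom (mu i) 1 \<in> hyperplane lam" for i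
    using c0 mu1 by (simp add: hyperplane_Lf Lf_diff Lf_monom lam_eq mu1[unfolded One_nat_def])
  define s where "s = mu 2"
  define t where "t = mu 3 - mu 2 ^ 2"
  have recur: "mu (n+2) = s * mu (n+1) + t * mu n" for n
  proof -
    have "(monom 1 n - monom (mu n) 1) * (monom 1 2 - monom (mu 2) 1) \<in> hyperplane lam"
      using mc P unfolding mult_closed_def by blast
    then have "Lf lam (monom 1 (n+2) - monom (mu 2) (n+1) - monom (mu n) 3 + monom (mu n * mu 2) 2) = 0"
      by (simp only: prod_eq hyperplane_Lf mem_Collect_eq)
    then have "c * (mu (n+2) - mu 2 * mu (n+1) - mu n * mu 3 + mu n * mu 2 * mu 2) = 0"
      by (simp add: Lf_diff Lf_add Lf_monom lam_eq algebra_simps)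
    then have "mu (n+2) - mu 2 * mu (n+1) - mu n * mu 3 + mu n * mu 2 * mu 2 = 0"
      using c0 by simp
    then show ?thesis by (simp add: s_def t_def power2_eq_square algebra_simps)
  qed
  have H_eq: "hyperplane lam = {p. Lf mu p = 0}"
    using c0 by (simp add: hyperplane_Lf lam_eq Lf_scale)
  define D where "D = s^2 + 4*t"
  consider "D > 0" | "D = 0" | "D < 0" by linarith
  then show ?thesis
  proof cases
    case 1
    define r where "r = sqrt D"
    have r2: "r^2 = D" using 1 by (simp add: r_def)
    have rpos: "r > 0" using 1 by (simp add: r_def)
    define b where "b = (s + r)/2"
    define g where "g = (s - r)/2"
    have bg: "b - g = r" by (simp add: b_def g_def field_simps)
    have bq: "b^2 = s*b + t" using r2 unfolding b_def D_def by (simp add: field_simps power2_eq_square)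
    have gq: "g^2 = s*g + t" using r2 unfolding g_def D_def by (simp add: field_simps power2_eq_square)
    have "mu = (\<lambda>i. (b^i - g^i) / (b - g))"
    proof (rule rec_uniq[where s=s and t=t])
      show "mu 0 = (b^0 - g^0)/(b-g)" using mu0 by simp
      show "mu 1 = (b^1 - g^1)/(b-g)" using mu1 bg rpos by simp
      show "mu (n+2) = s * mu (n+1) + t * mu n" for n by (rule recur)
      show "(b^(n+2) - g^(n+2))/(b-g) = s * ((b^(n+1) - g^(n+1))/(b-g)) + t * ((b^n - g^n)/(b-g))" for n
      proof -
        have "b^(n+2) = b^n * b^2" "g^(n+2) = g^n * g^2" by (simp_all only: power_add)
        then have "b^(n+2) - g^(n+2) = s * (b^(n+1) - g^(n+1)) + t * (b^n - g^n)"
          using bq gq by (simp add: algebra_simps)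
        then show ?thesis by (simp add: add_divide_distrib)
      qed
    qed
    then have "hyperplane lam = H_two_points b g"
      using H_eq bg rpos by (simp add: Lf_two H_two_points_def)
    moreover have "b \<noteq> g" using bg rpos by simp
    ultimately show ?thesis by blast
  next
    case 2
    define b where "b = s/2"
    have sb: "s = 2*b" and tb: "t = - (b^2)" using 2 by (simp_all add: b_def D_def power2_eq_square field_simps)
    have "mu = (\<lambda>i. of_nat i * b^(i-1))"
    proof (rule rec_uniq[where s=s and t=t])
      show "mu 0 = of_nat 0 * b^(0-1)" using mu0 by simp
      show "mu 1 = of_nat 1 * b^(1-1)" using mu1 by simp
      show "mu (n+2) = s * mu (n+1) + t * mu n" for n by (rule recur)
      show "of_nat (n+2) * b^(n+2-1) = s * (of_nat (n+1) * b^(n+1-1)) + t * (of_nat n * b^(n-1))" for n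
      proof (cases n)
        case 0 then show ?thesis by (simp add: sb)
      next
        case (Suc m)
        then show ?thesis by (simp add: sb tb power2_eq_square algebra_simps)
      qed
    qed
    then have "hyperplane lam = H_deriv b"
      using H_eq by (simp add: Lf_deriv Lf_deriv[unfolded One_nat_def] H_deriv_def)
    then show ?thesis by blast
  next
    case 3
    define r where "r = sqrt (-D)"
    have r2: "r^2 = -D" using 3 by (simp add: r_def)
    have rpos: "r > 0" using 3 by (simp add: r_def)
    define z where "z = Complex (s/2) (r/2)"
    have Imz: "Im z = r/2" by (simp add: z_def)
    have zq: "z^2 = of_real s * z + of_real t"
      using r2 unfolding z_def D_def
      by (simp add: complex_eq_iff power2_eq_square field_simps)
    have "mu = (\<lambda>i. Im (z^i) / Im z)"
    proof (rule rec_uniq[where s=s and t=t])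
      show "mu 0 = Im (z^0) / Im z" using mu0 by simp
      show "mu 1 = Im (z^1) / Im z" using mu1 Imz rpos by simp
      show "mu (n+2) = s * mu (n+1) + t * mu n" for n by (rule recur)
      show "Im (z^(n+2)) / Im z = s * (Im (z^(n+1)) / Im z) + t * (Im (z^n) / Im z)" for n
      proof -
        have "z^(n+2) = z^n * z^2" by (simp only: power_add)
        also have "\<dots> = of_real s * z^(n+1) + of_real t * z^n" by (simp add: zq algebra_simps)
        finally have "Im (z^(n+2)) = s * Im (z^(n+1)) + t * Im (z^n)" by simp
        then show ?thesis by (simp only: add_divide_distrib times_divide_eq_right)
      qed
    qed
    then have "hyperplane lam = {p. Im (poly (map_poly complex_of_real p) z) / Im z = 0}"
      using H_eq by (simp only: Lf_Im)
    moreover have "Im z \<noteq> 0" using Imz rpos by simp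
    ultimately have "hyperplane lam = H_conj z"
      by (simp add: H_conj_iff set_eq_iff)
    moreover have "z \<notin> \<real>" using Imz rpos by (simp add: complex_is_Real_iff)
    ultimately show ?thesis by blast
  qed
qed

theorem lemma4p13:
  shows "(\<forall>lam :: nat \<Rightarrow> real. lam 0 = 0 \<longrightarrow> lam 1 \<noteq> 0 \<longrightarrow>
            (mult_closed (hyperplane lam) \<longleftrightarrow>
               (\<exists>\<beta> \<gamma>. \<beta> \<noteq> \<gamma> \<and> hyperplane lam = H_two_points \<beta> \<gamma>) \<or>
               (\<exists>\<delta>. hyperplane lam = H_deriv \<delta>) \<or>
               (\<exists>z. z \<notin> \<real> \<and> hyperplane lam = H_conj z)))
       \<and> (\<forall>\<beta> \<gamma>. \<beta> \<noteq> \<gamma> \<longrightarrow>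
            (\<exists>lam. lam 0 = 0 \<and> lam 1 \<noteq> 0 \<and> hyperplane lam = H_two_points \<beta> \<gamma>))
       \<and> (\<forall>\<delta>. \<exists>lam. lam 0 = 0 \<and> lam 1 \<noteq> 0 \<and> hyperplane lam = H_deriv \<delta>)
       \<and> (\<forall>z. z \<notin> \<real> \<longrightarrow>
            (\<exists>lam. lam 0 = 0 \<and> lam 1 \<noteq> 0 \<and> hyperplane lam = H_conj z))"
proof (intro conjI allI impI)
  fix lam :: "nat \<Rightarrow> real"
  assume "lam 0 = 0" "lam 1 \<noteq> 0"
  then show "mult_closed (hyperplane lam) \<longleftrightarrow>
               (\<exists>\<beta> \<gamma>. \<beta> \<noteq> \<gamma> \<and> hyperplane lam = H_two_points \<beta> \<gamma>) \<or>
               (\<exists>\<delta>. hyperplane lam = H_deriv \<delta>) \<or>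
               (\<exists>z. z \<notin> \<real> \<and> hyperplane lam = H_conj z)"
    using forward mc_two mc_deriv mc_conj by metis
next
  fix b g :: real assume bg: "b \<noteq> g"
  show "\<exists>lam. lam 0 = 0 \<and> lam 1 \<noteq> 0 \<and> hyperplane lam = H_two_points b g"
  proof (intro exI conjI)
    let ?l = "\<lambda>i. (b^i - g^i) / (b - g)"
    show "?l 0 = 0" by simp
    show "?l 1 \<noteq> 0" using bg by simp
    show "hyperplane ?l = H_two_points b g"
      using bg by (simp add: hyperplane_Lf Lf_two H_two_points_def)
  qed
next
  fix d :: real
  show "\<exists>lam. lam 0 = 0 \<and> lam 1 \<noteq> 0 \<and> hyperplane lam = H_deriv d"
  proof (intro exI conjI)
    let ?l = "\<lambda>i. of_nat i * d^(i-1)"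
    show "?l 0 = 0" by simp
    show "?l 1 \<noteq> 0" by simp
    show "hyperplane ?l = H_deriv d"
      by (simp add: hyperplane_Lf Lf_deriv Lf_deriv[unfolded One_nat_def] H_deriv_def)
  qed
next
  fix z :: complex assume z: "z \<notin> \<real>"
  then have Imz: "Im z \<noteq> 0" by (simp add: complex_is_Real_iff)
  show "\<exists>lam. lam 0 = 0 \<and> lam 1 \<noteq> 0 \<and> hyperplane lam = H_conj z"
  proof (intro exI conjI)
    let ?l = "\<lambda>i. Im (z^i) / Im z"
    show "?l 0 = 0" by simp
    show "?l 1 \<noteq> 0" using Imz by simp
    show "hyperplane ?l = H_conj z"
      using Imz by (simp only: hyperplane_Lf Lf_Im) (simp add: H_conj_iff set_eq_iff)
  qed
qed
end
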